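(* Let $\mathbf Z=(Z_t)_{t\in[0,1]}$ be a process with continuous nonnegative paths such that $\max_{t\in[0,1]}Z_t=m$ a.s. for a constant $m\in[1,\infty)$ and $E(Z_t)=1$ for all $t$, let $U$ be uniformly distributed on $[0,1]$ and independent of $\mathbf Z$, set $\mathbf Y:=\mathbf Z/U$ and $\mathbf V:=-1/\mathbf Y$. Then for every $f\in\bar E^-[0,1]$ with $\|f\|_\infty\le m$ there is some $s_0<0$ such that \[ W_f(s):=P(\mathbf V\le s|f|)=1+s\|f\|_D,\qquad s_0\le s\le 0, \] where $\|f\|_D=E(\sup_{t\in[0,1]}(|f(t)|Z_t))$.
   Context: $E[0,1]$: bounded functions on $[0,1]$ with finitely many discontinuities; $\bar E^-[0,1]=\{f\in E[0,1]:f\le0\}$; $\|f\|_\infty=\sup_t|f(t)|$; inequalities are pointwise for all $t\in[0,1]$. *)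

theory Defs
  imports "HOL-Probability.Probability"
begin

definition E01 :: "(real \<Rightarrow> real) \<Rightarrow> bool" where
  "E01 f \<longleftrightarrow> bounded (f ` {0..1}) \<and>
     finite {t \<in> {0..1}. \<not> continuous (at t within {0..1}) f}"

definition E01_neg :: "(real \<Rightarrow> real) \<Rightarrow> bool" where
  "E01_neg f \<longleftrightarrow> E01 f \<and> (\<forall>t\<in>{0..1}. f t \<le> 0)"

definition sup_norm01 :: "(real \<Rightarrow> real) \<Rightarrow> real" where
  "sup_norm01 f = (SUP t\<in>{0..1}. \<bar>f t\<bar>)"

text \<open>Y := Z/U and V := -1/Y, with values in the extended reals
  (so Z_t = 0 gives V_t = -\<infinity>).\<close>
definition procY :: "(real \<Rightarrow> 'a \<Rightarrow> real) \<Rightarrow> ('a \<Rightarrow> real) \<Rightarrow> real \<Rightarrow> 'a \<Rightarrow> ereal" where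
  "procY Z U t \<omega> = ereal (Z t \<omega>) / ereal (U \<omega>)"

definition procV :: "(real \<Rightarrow> 'a \<Rightarrow> real) \<Rightarrow> ('a \<Rightarrow> real) \<Rightarrow> real \<Rightarrow> 'a \<Rightarrow> ereal" where
  "procV Z U t \<omega> = - (1 / procY Z U t \<omega>)"

definition Wf :: "'a measure \<Rightarrow> (real \<Rightarrow> 'a \<Rightarrow> real) \<Rightarrow> ('a \<Rightarrow> real) \<Rightarrow> (real \<Rightarrow> real) \<Rightarrow> real \<Rightarrow> real" where
  "Wf M Z U f s = measure M {\<omega> \<in> space M. \<forall>t\<in>{0..1}. procV Z U t \<omega> \<le> ereal (s * \<bar>f t\<bar>)}"

definition D_norm :: "'a measure \<Rightarrow> (real \<Rightarrow> 'a \<Rightarrow> real) \<Rightarrow> (real \<Rightarrow> real) \<Rightarrow> real" where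
  "D_norm M Z f = (\<integral>\<omega>. (SUP t\<in>{0..1}. \<bar>f t\<bar> * Z t \<omega>) \<partial>M)"

end

theory Submission imports Defs begin

lemma sup_countable:
  fixes a z :: "real \<Rightarrow> real"
  assumes aE: "E01 a" and zc: "continuous_on {0..1} z"
  defines "D \<equiv> ({0<..<1} \<inter> \<rat>) \<union> {0,1} \<union> {t\<in>{0..1}. \<not> continuous (at t within {0..1}) a}"
  shows "countable D" "D \<subseteq> {0..1}" "0 \<in> D"
    "\<exists>B. \<forall>t\<in>{0..1}. \<bar>a t\<bar> * z t \<le> B"
    "bdd_above ((\<lambda>t. \<bar>a t\<bar> * z t) ` {0..1})"
    "(SUP t\<in>{0..1}. \<bar>a t\<bar> * z t) = (SUP t\<in>D. \<bar>a t\<bar> * z t)"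
proof -
  have fin: "finite {t\<in>{0..1}. \<not> continuous (at t within {0..1}) a}"
    using aE unfolding E01_def by auto
  show "countable D" unfolding D_def
    using fin countable_rat by (auto intro: countable_finite)
  show DS: "D \<subseteq> {0..1}" unfolding D_def by auto
  show "0 \<in> D" unfolding D_def by auto
  obtain Ba where Ba: "\<forall>t\<in>{0..1}. \<bar>a t\<bar> \<le> Ba"
    using aE unfolding E01_def bounded_iff by auto
  have "bounded (z ` {0..1})"
    by (intro compact_imp_bounded compact_continuous_image zc) auto
  then obtain Bz where Bz: "\<forall>t\<in>{0..1}. \<bar>z t\<bar> \<le> Bz"
    unfolding bounded_iff by auto
  have bnd: "\<forall>t\<in>{0..1}. \<bar>a t\<bar> * z t \<le> Ba * Bz"
  proof
    fix t :: real assume t: "t \<in> {0..1}"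
    have "\<bar>a t\<bar> * z t \<le> \<bar>a t\<bar> * \<bar>z t\<bar>" by (simp add: mult_left_mono)
    also have "\<dots> \<le> Ba * Bz" using Ba Bz t by (intro mult_mono) auto
    finally show "\<bar>a t\<bar> * z t \<le> Ba * Bz" .
  qed
  then show "\<exists>B. \<forall>t\<in>{0..1}. \<bar>a t\<bar> * z t \<le> B" by blast
  show bdd: "bdd_above ((\<lambda>t. \<bar>a t\<bar> * z t) ` {0..1})"
    using bnd by (auto intro: bdd_aboveI2)
  have bddD: "bdd_above ((\<lambda>t. \<bar>a t\<bar> * z t) ` D)"
    using bdd DS by (meson bdd_above_mono image_mono)
  have D0: "D \<noteq> {}" unfolding D_def by auto
  show "(SUP t\<in>{0..1}. \<bar>a t\<bar> * z t) = (SUP t\<in>D. \<bar>a t\<bar> * z t)"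
  proof (rule antisym)
    show "(SUP t\<in>D. \<bar>a t\<bar> * z t) \<le> (SUP t\<in>{0..1}. \<bar>a t\<bar> * z t)"
      using D0 bdd DS by (rule cSUP_subset_mono) auto
    show "(SUP t\<in>{0..1}. \<bar>a t\<bar> * z t) \<le> (SUP t\<in>D. \<bar>a t\<bar> * z t)"
    proof (rule cSUP_least)
      fix t :: real assume t: "t \<in> {0..1}"
      show "\<bar>a t\<bar> * z t \<le> (SUP t\<in>D. \<bar>a t\<bar> * z t)"
      proof (cases "t \<in> D")
        case True then show ?thesis using bddD by (auto intro: cSUP_upper)
      next
        case False
        let ?T = "{0<..<1} \<inter> \<rat> :: real set"
        have t01: "t \<in> {0<..<1}" using False t unfolding D_def by auto
        have ca: "continuous (at t within {0..1}) a" using False t unfolding D_def by auto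
        have cz: "continuous (at t within {0..1}) z"
          using zc t continuous_on_eq_continuous_within by blast
        have "continuous (at t within {0..1}) (\<lambda>t. \<bar>a t\<bar> * z t)"
          using ca cz by (intro continuous_intros)
        then have lim: "((\<lambda>t. \<bar>a t\<bar> * z t) \<longlongrightarrow> \<bar>a t\<bar> * z t) (at t within ?T)"
          unfolding continuous_within by (rule tendsto_within_subset) auto
        have "t \<in> closure ?T"
          using subsetD[OF open_Int_closure_subset[OF open_greaterThanLessThan, of "0::real" 1 "\<rat>"], of t] t01 Rats_closure_real by auto
        moreover have "t \<notin> ?T" using False unfolding D_def by auto
        ultimately have "t islimpt ?T"
          by (metis Diff_empty Diff_insert0 islimpt_in_closure)
        then have nt: "\<not> trivial_limit (at t within ?T)"
          using trivial_limit_within by blast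
        have TD: "\<And>x. x \<in> ?T \<Longrightarrow> x \<in> D" unfolding D_def by auto
        have ev: "eventually (\<lambda>x. \<bar>a x\<bar> * z x \<le> (SUP t\<in>D. \<bar>a t\<bar> * z t)) (at t within ?T)"
          unfolding eventually_at_filter
          using bddD by (intro always_eventually) (auto intro!: cSUP_upper simp: D_def[symmetric] TD)
        show ?thesis using tendsto_upperbound[OF lim ev nt] .
      qed
    qed (auto simp: bdd)
  qed
qed

lemma sup_meas:
  fixes Z :: "real \<Rightarrow> 'a \<Rightarrow> real" and a :: "real \<Rightarrow> real"
  assumes Zm: "\<forall>t\<in>{0..1}. Z t \<in> borel_measurable M"
    and Zc: "\<forall>\<omega>\<in>space M. continuous_on {0..1} (\<lambda>t. Z t \<omega>)"
    and aE: "E01 a"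
  shows "(\<lambda>\<omega>. SUP t\<in>{0..1}. \<bar>a t\<bar> * Z t \<omega>) \<in> borel_measurable
           (vimage_algebra (space M) (\<lambda>\<omega>. \<lambda>t\<in>{0..1}. Z t \<omega>) (PiM {0..1} (\<lambda>_. borel)))"
    and "(\<lambda>\<omega>. SUP t\<in>{0..1}. \<bar>a t\<bar> * Z t \<omega>) \<in> borel_measurable M"
proof -
  define D where "D \<equiv> ({0<..<1} \<inter> \<rat>) \<union> {0,1} \<union> {t\<in>{0..1}. \<not> continuous (at t within {0..1}) a}"
  define G where "G = (\<lambda>\<omega>. \<lambda>t\<in>{0..1::real}. Z t \<omega>)"
  define h where "h = (\<lambda>x::real\<Rightarrow>real. real_of_ereal (SUP t\<in>D. ereal (\<bar>a t\<bar> * x t)))"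
  have cD: "countable D" and DS: "D \<subseteq> {0..1}" and D0: "0 \<in> D"
    using sup_countable[OF aE continuous_on_const] unfolding D_def by auto
  have hm: "h \<in> borel_measurable (PiM {0..1} (\<lambda>_. borel))"
    unfolding h_def
  proof (intro borel_measurable_real_of_ereal borel_measurable_SUP[OF cD])
    fix t assume "t \<in> D"
    then have "t \<in> {0..1}" using DS by auto
    then show "(\<lambda>x. ereal (\<bar>a t\<bar> * x t)) \<in> borel_measurable (PiM {0..1} (\<lambda>_. borel))"
      by measurable
  qed
  have eq: "(SUP t\<in>{0..1}. \<bar>a t\<bar> * Z t \<omega>) = h (G \<omega>)" if \<omega>: "\<omega> \<in> space M" for \<omega>
  proof -
    note sc = sup_countable[OF aE Zc[rule_format, OF \<omega>], folded D_def]
    obtain B where B: "\<forall>t\<in>{0..1}. \<bar>a t\<bar> * Z t \<omega> \<le> B" using sc(4) by blast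
    have "(SUP t\<in>D. ereal (\<bar>a t\<bar> * Z t \<omega>)) \<le> ereal B"
      using B DS by (auto intro!: SUP_least)
    moreover have "ereal (\<bar>a 0\<bar> * Z 0 \<omega>) \<le> (SUP t\<in>D. ereal (\<bar>a t\<bar> * Z t \<omega>))"
      using D0 by (rule SUP_upper2) auto
    ultimately have fin: "\<bar>SUP t\<in>D. ereal (\<bar>a t\<bar> * Z t \<omega>)\<bar> \<noteq> \<infinity>"
      by (cases "SUP t\<in>D. ereal (\<bar>a t\<bar> * Z t \<omega>)") auto
    have "h (G \<omega>) = real_of_ereal (SUP t\<in>D. ereal (\<bar>a t\<bar> * Z t \<omega>))"
      unfolding h_def G_def using DS by (intro arg_cong[where f=real_of_ereal] SUP_cong) auto
    also have "\<dots> = (SUP t\<in>D. \<bar>a t\<bar> * Z t \<omega>)"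
      using ereal_SUP[OF fin] by (metis real_of_ereal.simps(1))
    finally show ?thesis using sc(6) by simp
  qed
  have Gv: "G \<in> measurable (vimage_algebra (space M) G (PiM {0..1} (\<lambda>_. borel))) (PiM {0..1} (\<lambda>_. borel))"
    by (rule measurable_vimage_algebra1) (auto simp: G_def space_PiM)
  have GM: "G \<in> measurable M (PiM {0..1} (\<lambda>_. borel))"
    unfolding G_def using Zm by (intro measurable_restrict) auto
  show "(\<lambda>\<omega>. SUP t\<in>{0..1}. \<bar>a t\<bar> * Z t \<omega>) \<in> borel_measurable
           (vimage_algebra (space M) (\<lambda>\<omega>. \<lambda>t\<in>{0..1}. Z t \<omega>) (PiM {0..1} (\<lambda>_. borel)))"
    unfolding G_def[symmetric]
    by (rule measurable_cong[THEN iffD2, OF _ measurable_comp[OF Gv hm]]) (auto simp: eq)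
  show "(\<lambda>\<omega>. SUP t\<in>{0..1}. \<bar>a t\<bar> * Z t \<omega>) \<in> borel_measurable M"
    by (rule measurable_cong[THEN iffD2, OF _ measurable_comp[OF GM hm]]) (auto simp: eq)
qed

lemma one_div_ereal: "x \<noteq> 0 \<Longrightarrow> 1 / ereal x = ereal (1 / x)"
  by (metis ereal_divide one_ereal_def)

lemma ereal_div_facts: "(1::ereal) / 0 = \<infinity>"  "(1::ereal) / \<infinity> = 0"
  by (simp_all add: divide_ereal_def)
lemma ereal_div_fact3: "(1::ereal) / ereal 0 = \<infinity>"
  by (simp add: divide_ereal_def)

lemma pw:
  fixes z a s u :: real
  assumes z: "z \<ge> 0" and a: "a \<ge> 0" and s: "s \<le> 0"
  shows "(- (1 / (ereal z / ereal u)) \<le> ereal (s * a)) \<longleftrightarrow> (if 0 \<le> u then - s * a * z \<le> u else z = 0)"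
proof (cases "z = 0")
  case True
  have h0: "ereal 0 / ereal u = 0"
    by simp
  show ?thesis using True by (simp add: h0 ereal_div_facts ereal_div_fact3)
next
  case False
  then have zp: "z > 0" using z by auto
  consider "u > 0" | "u = 0" | "u < 0" by linarith
  then show ?thesis
  proof cases
    case 1
    have "ereal z / ereal u = ereal (z / u)" using 1 by simp
    moreover have "1 / ereal (z / u) = ereal (u / z)" using 1 zp by (simp add: one_div_ereal)
    moreover have "(- (u / z) \<le> s * a) \<longleftrightarrow> (- s * a * z \<le> u)"
      using zp by (auto simp: field_simps)
    ultimately show ?thesis using 1 by simp
  next
    case 2
    have "ereal z / ereal u = \<infinity>" using 2 zp by simp
    then have "- (1 / (ereal z / ereal u)) = 0" by (simp add: ereal_div_facts)
    moreover have "(0 \<le> s * a) \<longleftrightarrow> - s * a * z \<le> 0"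
      using zp a s by (auto simp: mult_le_0_iff zero_le_mult_iff)
    ultimately show ?thesis using 2 by simp
  next
    case 3
    have "ereal z / ereal u = ereal (z / u)" using 3 by simp
    moreover have "1 / ereal (z / u) = ereal (u / z)" using 3 zp by (simp add: one_div_ereal)
    moreover have "\<not> (- (u / z) \<le> s * a)"
      proof -
      have "u / z < 0" using zp 3 by (simp add: divide_neg_pos)
      moreover have "s * a \<le> 0" using a s by (simp add: mult_nonpos_nonneg)
      ultimately show ?thesis by linarith
    qed
    ultimately show ?thesis using 3 zp by simp
  qed
qed

lemma gchar:
  fixes a z :: "real \<Rightarrow> real" and s u :: real
  assumes bdd: "bdd_above ((\<lambda>t. \<bar>a t\<bar> * z t) ` {0..1})" and s: "s \<le> 0" and u: "0 \<le> u"
  shows "(\<forall>t\<in>{0..1}. - s * \<bar>a t\<bar> * z t \<le> u) \<longleftrightarrow> - s * (SUP t\<in>{0..1}. \<bar>a t\<bar> * z t) \<le> u"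
proof (cases "s = 0")
  case True then show ?thesis using u by simp
next
  case False
  then have c: "- s > 0" using s by auto
  have "(\<forall>t\<in>{0..1}. - s * \<bar>a t\<bar> * z t \<le> u) \<longleftrightarrow> (\<forall>t\<in>{0..1}. \<bar>a t\<bar> * z t \<le> u / (- s))"
    by (simp only: pos_le_divide_eq[OF c]) (simp add: algebra_simps)
  also have "\<dots> \<longleftrightarrow> (SUP t\<in>{0..1}. \<bar>a t\<bar> * z t) \<le> u / (- s)"
    using bdd by (simp add: cSUP_le_iff)
  also have "\<dots> \<longleftrightarrow> - s * (SUP t\<in>{0..1}. \<bar>a t\<bar> * z t) \<le> u"
    by (simp only: pos_le_divide_eq[OF c]) (simp add: algebra_simps)
  finally show ?thesis .
qed

lemma unif_emeasure:
  fixes x :: real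
  shows "emeasure (uniform_measure lborel {0..1::real}) {u. x \<le> u} = ennreal (min 1 (1 - x))"
proof -
  have "emeasure (uniform_measure lborel {0..1::real}) {u. x \<le> u} = emeasure lborel ({u. x \<le> u} \<inter> {0..1})"
    by (simp add: Int_commute divide_ennreal_def)
  also have "\<dots> = ennreal (min 1 (1 - x))"
  proof (cases "x \<le> 0")
    case True
    then have "{u. x \<le> u} \<inter> {0..1} = {0..1::real}" by auto
    then show ?thesis using True by simp
  next
    case False
    then have "{u. x \<le> u} \<inter> {0..1} = {x..1::real}" by auto
    then show ?thesis using False by (cases "x \<le> 1") (auto simp: ennreal_neg)
  qed
  finally show ?thesis .
qed

theorem mainTheorem8:
  fixes M :: "'a measure" and Z :: "real \<Rightarrow> 'a \<Rightarrow> real" and U :: "'a \<Rightarrow> real"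
    and m :: real and f :: "real \<Rightarrow> real"
  assumes "prob_space M"
    and "\<forall>t\<in>{0..1}. Z t \<in> borel_measurable M"
    and "\<forall>\<omega>\<in>space M. continuous_on {0..1} (\<lambda>t. Z t \<omega>)"
    and "\<forall>\<omega>\<in>space M. \<forall>t\<in>{0..1}. Z t \<omega> \<ge> 0"
    and "m \<ge> 1"
    and "AE \<omega> in M. (SUP t\<in>{0..1}. Z t \<omega>) = m"
    and "\<forall>t\<in>{0..1}. prob_space.expectation M (Z t) = 1"
    and "U \<in> borel_measurable M"
    and "distr M borel U = uniform_measure lborel {0..1}"
    and "prob_space.indep_set M (sets (vimage_algebra (space M) U borel))
       (sets (vimage_algebra (space M) (\<lambda>\<omega>. \<lambda>t\<in>{0..1}. Z t \<omega>) (PiM {0..1} (\<lambda>_. borel))))"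
    and "E01_neg f"
    and "sup_norm01 f \<le> m"
  shows "\<exists>s0<0. \<forall>s\<in>{s0..0}. Wf M Z U f s = 1 + s * D_norm M Z f"
proof -
  interpret P: prob_space M by fact
  note Zm = assms(2) and Zc = assms(3) and Zn = assms(4) and m1 = assms(5) and supZ = assms(6)
    and Um[measurable] = assms(8) and Ud = assms(9) and ind = assms(10) and fN = assms(12)
  have fE: "E01 f" using assms(11) unfolding E01_neg_def by auto
  have oneE: "E01 (\<lambda>_. 1)" unfolding E01_def by (auto simp: image_constant_conv)
  define g where "g = (\<lambda>\<omega>. SUP t\<in>{0..1}. \<bar>f t\<bar> * Z t \<omega>)"
  define g1 where "g1 = (\<lambda>\<omega>. SUP t\<in>{0..1::real}. Z t \<omega>)"
  have gv: "g \<in> borel_measurable (vimage_algebra (space M) (\<lambda>\<omega>. \<lambda>t\<in>{0..1}. Z t \<omega>) (PiM {0..1} (\<lambda>_. borel)))"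
    unfolding g_def by (rule sup_meas(1)[OF Zm Zc fE])
  have gm[measurable]: "g \<in> borel_measurable M"
    unfolding g_def by (rule sup_meas(2)[OF Zm Zc fE])
  have g1m[measurable]: "g1 \<in> borel_measurable M"
    using sup_meas(2)[OF Zm Zc oneE] unfolding g1_def by simp
  have bddf: "bdd_above ((\<lambda>t. \<bar>f t\<bar> * Z t \<omega>) ` {0..1})" if "\<omega> \<in> space M" for \<omega>
    using sup_countable(5)[OF fE Zc[rule_format, OF that]] .
  have bdd1: "bdd_above ((\<lambda>t. Z t \<omega>) ` {0..1})" if "\<omega> \<in> space M" for \<omega>
    using sup_countable(5)[OF oneE Zc[rule_format, OF that]] by simp
  have gnn: "0 \<le> g \<omega>" if "\<omega> \<in> space M" for \<omega>
    unfolding g_def using bddf[OF that] Zn that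
    by (intro cSUP_upper2[of _ _ 0]) auto
  obtain Bf where Bf: "\<forall>t\<in>{0..1}. \<bar>f t\<bar> \<le> Bf"
    using fE unfolding E01_def bounded_iff by auto
  have fle: "\<bar>f t\<bar> \<le> m" if "t \<in> {0..1}" for t
  proof -
    have "\<bar>f t\<bar> \<le> sup_norm01 f" unfolding sup_norm01_def
      using that Bf by (intro cSUP_upper) (auto intro: bdd_aboveI2)
    then show ?thesis using fN by linarith
  qed
  have gAE: "AE \<omega> in M. g \<omega> \<le> m * m"
    using supZ
  proof (rule AE_mp[OF _ AE_I2[OF impI]])
    fix \<omega> assume \<omega>: "\<omega> \<in> space M" and sm: "(SUP t\<in>{0..1}. Z t \<omega>) = m"
    show "g \<omega> \<le> m * m" unfolding g_def
    proof (rule cSUP_least)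
      fix t :: real assume t: "t \<in> {0..1}"
      have "Z t \<omega> \<le> m" using sm bdd1[OF \<omega>] t by (metis cSUP_upper)
      then show "\<bar>f t\<bar> * Z t \<omega> \<le> m * m"
        using fle[OF t] Zn \<omega> t by (intro mult_mono) auto
    qed auto
  qed
  have UAE: "AE \<omega> in M. 0 \<le> U \<omega>"
  proof -
    have "AE x in distr M borel U. 0 \<le> x"
      unfolding Ud by (subst AE_uniform_measure) auto
    then show ?thesis by (subst (asm) AE_distr_iff) auto
  qed
  have gint: "integrable M g"
  proof (rule P.integrable_const_bound[where B="m * m"])
    show "AE \<omega> in M. norm (g \<omega>) \<le> m * m"
      using gAE by (rule AE_mp[OF _ AE_I2]) (use gnn in auto)
  qed (rule gm)
  have iv: "P.indep_var borel U borel g"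
    unfolding P.indep_var_eq
  proof (intro conjI)
    show "U \<in> measurable M borel" by (fact Um)
    show "g \<in> measurable M borel" by (fact gm)
    show "P.indep_set (sigma_sets (space M) {U -` A \<inter> space M |A. A \<in> sets borel})
       (sigma_sets (space M) {g -` A \<inter> space M |A. A \<in> sets borel})"
      using ind unfolding P.indep_set_def
    proof (rule P.indep_sets_mono_sets)
      fix i :: bool
      let ?V = "vimage_algebra (space M) (\<lambda>\<omega>. \<lambda>t\<in>{0..1}. Z t \<omega>) (PiM {0..1} (\<lambda>_. borel))"
      have "sigma_sets (space M) {g -` A \<inter> space M |A. A \<in> sets borel} \<subseteq> sets ?V"
      proof -
        have "{g -` A \<inter> space M |A. A \<in> sets borel} \<subseteq> sets ?V"
          using measurable_sets[OF gv] by auto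
        then show ?thesis using sets.sigma_sets_subset[of _ ?V] by simp
      qed
      then show "(case i of True \<Rightarrow> sigma_sets (space M) {U -` A \<inter> space M |A. A \<in> sets borel}
              | False \<Rightarrow> sigma_sets (space M) {g -` A \<inter> space M |A. A \<in> sets borel})
             \<subseteq> (case i of True \<Rightarrow> sets (vimage_algebra (space M) U borel) | False \<Rightarrow> sets ?V)"
        by (cases i) (auto simp: sets_vimage_algebra)
    qed
  qed
  have dist_eq: "distr M borel U \<Otimes>\<^sub>M distr M borel g = distr M (borel \<Otimes>\<^sub>M borel) (\<lambda>x. (U x, g x))"
    using iv unfolding P.indep_var_distribution_eq by auto
  interpret PS: pair_sigma_finite "distr M borel U" "distr M borel g"
    by (intro pair_sigma_finite.intro prob_space_imp_sigma_finite P.prob_space_distr) simp_all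
  have key: "measure M {\<omega>\<in>space M. c * g \<omega> \<le> U \<omega>} = 1 - c * integral\<^sup>L M g"
    if c0: "0 \<le> c" and c1: "c * (m * m) \<le> 1" for c :: real
  proof -
    define A where "A = {p :: real \<times> real. c * snd p \<le> fst p}"
    have A[measurable]: "A \<in> sets (borel \<Otimes>\<^sub>M borel)"
    proof -
      have "{p\<in>space (borel \<Otimes>\<^sub>M borel). c * snd p \<le> fst p} \<in> sets (borel \<Otimes>\<^sub>M borel)"
        by measurable
      moreover have "A = {p\<in>space (borel \<Otimes>\<^sub>M borel). c * snd p \<le> fst p}"
        by (auto simp: A_def space_pair_measure)
      ultimately show ?thesis by simp
    qed
    have "emeasure M {\<omega>\<in>space M. c * g \<omega> \<le> U \<omega>} = emeasure (distr M (borel \<Otimes>\<^sub>M borel) (\<lambda>x. (U x, g x))) A"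
    proof -
      have "(\<lambda>x. (U x, g x)) -` A \<inter> space M = {\<omega>\<in>space M. c * g \<omega> \<le> U \<omega>}"
        by (auto simp: A_def)
      moreover have "(\<lambda>x. (U x, g x)) \<in> measurable M (borel \<Otimes>\<^sub>M borel)" by measurable
      ultimately show ?thesis using emeasure_distr[of "\<lambda>x. (U x, g x)" M "borel \<Otimes>\<^sub>M borel" A] A by simp
    qed
    also have "\<dots> = emeasure (distr M borel U \<Otimes>\<^sub>M distr M borel g) A"
      by (simp add: dist_eq)
    also have "\<dots> = (\<integral>\<^sup>+y. emeasure (distr M borel U) ((\<lambda>x. (x, y)) -` A) \<partial>distr M borel g)"
      by (rule PS.emeasure_pair_measure_alt2) (simp add: dist_eq)
    also have "\<dots> = (\<integral>\<^sup>+y. ennreal (min 1 (1 - c * y)) \<partial>distr M borel g)"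
      by (intro nn_integral_cong) (simp add: A_def Ud unif_emeasure)
    also have "\<dots> = (\<integral>\<^sup>+\<omega>. ennreal (min 1 (1 - c * g \<omega>)) \<partial>M)"
      by (rule nn_integral_distr) simp_all
    also have "\<dots> = (\<integral>\<^sup>+\<omega>. ennreal (1 - c * g \<omega>) \<partial>M)"
    proof (intro nn_integral_cong)
      fix x assume "x \<in> space M"
      then have "0 \<le> c * g x" using gnn c0 by simp
      then show "ennreal (min 1 (1 - c * g x)) = ennreal (1 - c * g x)" by (simp add: min_absorb2)
    qed
    also have "\<dots> = ennreal (\<integral>\<omega>. (1 - c * g \<omega>) \<partial>M)"
    proof (rule nn_integral_eq_integral)
      show "integrable M (\<lambda>\<omega>. 1 - c * g \<omega>)" using gint by simp
      show "AE \<omega> in M. 0 \<le> 1 - c * g \<omega>"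
        using gAE
      proof (rule AE_mp[OF _ AE_I2[OF impI]])
        fix \<omega> assume "g \<omega> \<le> m * m"
        then have "c * g \<omega> \<le> c * (m * m)" using c0 by (rule mult_left_mono)
        then show "0 \<le> 1 - c * g \<omega>" using c1 by linarith
      qed
    qed
    also have "(\<integral>\<omega>. (1 - c * g \<omega>) \<partial>M) = 1 - c * integral\<^sup>L M g"
      using gint by (simp add: P.prob_space)
    finally have e: "emeasure M {\<omega>\<in>space M. c * g \<omega> \<le> U \<omega>} = ennreal (1 - c * integral\<^sup>L M g)" .
    have "0 \<le> 1 - c * integral\<^sup>L M g"
    proof -
      have "integral\<^sup>L M g \<le> integral\<^sup>L M (\<lambda>_. m * m)"
        using gint gAE by (intro integral_mono_AE) auto
      then have "integral\<^sup>L M g \<le> m * m" by (simp add: P.prob_space)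
      then have "c * integral\<^sup>L M g \<le> c * (m * m)" using c0 by (rule mult_left_mono)
      then show ?thesis using c1 by linarith
    qed
    then show ?thesis using e by (simp add: measure_def)
  qed
  show ?thesis
  proof (intro exI[of _ "- 1 / (m * m)"] conjI ballI)
    show "- 1 / (m * m) < 0" using m1 by (simp add: divide_neg_pos)
    fix s assume s: "s \<in> {- 1 / (m * m)..0}"
    have mm: "m * m > 0" using m1 by simp
    have s0: "s \<le> 0" using s by auto
    have c1: "- s * (m * m) \<le> 1"
      using s mm by (auto simp: field_simps)
    define E where "E = {\<omega> \<in> space M. \<forall>t\<in>{0..1}. procV Z U t \<omega> \<le> ereal (s * \<bar>f t\<bar>)}"
    have Echar: "E = {\<omega> \<in> space M. (0 \<le> U \<omega> \<and> - s * g \<omega> \<le> U \<omega>) \<or> (U \<omega> < 0 \<and> g1 \<omega> \<le> 0)}"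
    proof -
      have "(\<forall>t\<in>{0..1}. procV Z U t \<omega> \<le> ereal (s * \<bar>f t\<bar>)) \<longleftrightarrow>
            (0 \<le> U \<omega> \<and> - s * g \<omega> \<le> U \<omega>) \<or> (U \<omega> < 0 \<and> g1 \<omega> \<le> 0)"
        if \<omega>: "\<omega> \<in> space M" for \<omega>
      proof -
        have "(\<forall>t\<in>{0..1}. procV Z U t \<omega> \<le> ereal (s * \<bar>f t\<bar>)) \<longleftrightarrow>
            (\<forall>t\<in>{0..1}. if 0 \<le> U \<omega> then - s * \<bar>f t\<bar> * Z t \<omega> \<le> U \<omega> else Z t \<omega> = 0)"
          unfolding procV_def procY_def using Zn \<omega> s0 by (intro ball_cong refl pw) auto
        also have "\<dots> \<longleftrightarrow> (0 \<le> U \<omega> \<and> - s * g \<omega> \<le> U \<omega>) \<or> (U \<omega> < 0 \<and> g1 \<omega> \<le> 0)"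
        proof (cases "0 \<le> U \<omega>")
          case True
          then show ?thesis unfolding g_def using gchar[OF bddf[OF \<omega>] s0 True] by simp
        next
          case False
          have "(\<forall>t\<in>{0..1}. Z t \<omega> = 0) \<longleftrightarrow> g1 \<omega> \<le> 0"
            unfolding g1_def using bdd1[OF \<omega>] Zn \<omega>
            by (subst cSUP_le_iff) (auto intro: antisym)
          then show ?thesis using False by simp
        qed
        finally show ?thesis .
      qed
      then show ?thesis unfolding E_def by auto
    qed
    have Em: "E \<in> sets M" unfolding Echar by measurable
    have "Wf M Z U f s = measure M E" unfolding Wf_def E_def ..
    also have "\<dots> = measure M {\<omega>\<in>space M. - s * g \<omega> \<le> U \<omega>}"
    proof (rule measure_eq_AE[OF _ Em])
      show "AE \<omega> in M. (\<omega> \<in> E) = (\<omega> \<in> {\<omega> \<in> space M. - s * g \<omega> \<le> U \<omega>})"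
        using UAE by (rule AE_mp[OF _ AE_I2]) (auto simp: Echar)
    qed measurable
    also have "\<dots> = 1 - (- s) * integral\<^sup>L M g"
      using key[of "- s"] s0 c1 by simp
    also have "\<dots> = 1 + s * D_norm M Z f"
      unfolding D_norm_def g_def by simp
    finally show "Wf M Z U f s = 1 + s * D_norm M Z f" .
  qed
qed

end
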